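(* Let $p$ be a prime, $M>1$ an integer prime to $p$, $N>1$ an integer prime to $pM$, and let $\nu$ be the multiplicative order of $p$ in $(\mathbf{Z}/M)^\times$. Then for every integer $0\le d<M$ with $\gcd(d,M)=1$, $$\prod_{0\le j<\nu}\prod_{0\le k<N}\left\langle\Gamma_p\!\left(\frac{(p^jd)^\flat_M+kM}{MN}\right)\right\rangle=\prod_{0\le j<\nu}\left\langle\Gamma_p\!\left(\frac{(p^jd)^\flat_M}{M}\right)\right\rangle.$$
   Context: $\Gamma_p$ is Morita's $p$-adic Gamma function; $\omega$ is the Teichmüller character and $\langle x\rangle=x/\omega(x)$ for $x\in\mathbf{Z}_p^\times$. For $h>1$ and $a\in\mathbf{Z}$, $a^\flat_h$ is the unique integer in $[0,h)$ congruent to $a$ mod $h$. *)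

theory Defs
  imports "HOL-Number_Theory.Number_Theory"
begin

text \<open>p-adic integers are represented by their coherent sequences of residues:
  x :: nat => int, with x k the residue of x modulo p^k in [0, p^k).\<close>

definition padic_int :: "nat \<Rightarrow> (nat \<Rightarrow> int) \<Rightarrow> bool" where
  "padic_int p x \<longleftrightarrow> (\<forall>k. 0 \<le> x k \<and> x k < int p ^ k \<and> x (Suc k) mod int p ^ k = x k)"

text \<open>The p-adic number a/b (b prime to p).\<close>
definition padic_frac :: "nat \<Rightarrow> int \<Rightarrow> int \<Rightarrow> nat \<Rightarrow> int" where
  "padic_frac p a b = (\<lambda>k. THE r. 0 \<le> r \<and> r < int p ^ k \<and> [b * r = a] (mod int p ^ k))"

definition padic_mult :: "nat \<Rightarrow> (nat \<Rightarrow> int) \<Rightarrow> (nat \<Rightarrow> int) \<Rightarrow> nat \<Rightarrow> int" where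
  "padic_mult p x y = (\<lambda>k. (x k * y k) mod int p ^ k)"

definition padic_inv :: "nat \<Rightarrow> (nat \<Rightarrow> int) \<Rightarrow> nat \<Rightarrow> int" where
  "padic_inv p x = (\<lambda>k. THE r. 0 \<le> r \<and> r < int p ^ k \<and> [x k * r = 1] (mod int p ^ k))"

definition padic_prod :: "nat \<Rightarrow> ('a \<Rightarrow> nat \<Rightarrow> int) \<Rightarrow> 'a set \<Rightarrow> nat \<Rightarrow> int" where
  "padic_prod p f A = (\<lambda>k. (\<Prod>i\<in>A. f i k) mod int p ^ k)"

definition gamma_nat :: "nat \<Rightarrow> nat \<Rightarrow> int" where
  "gamma_nat p n = (-1) ^ n * (\<Prod>j\<in>{j \<in> {1..<n}. \<not> p dvd j}. int j)"

text \<open>Morita's Gamma_p on Z_p: the continuous extension, i.e. the limit of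
  Gamma_p(x_m) where x_m (in [0,p^m)) is x truncated mod p^m, which tends to x.\<close>
definition padic_gamma :: "nat \<Rightarrow> (nat \<Rightarrow> int) \<Rightarrow> nat \<Rightarrow> int" where
  "padic_gamma p x = (\<lambda>k. THE r. \<forall>\<^sub>F m in sequentially. gamma_nat p (nat (x m)) mod int p ^ k = r)"

text \<open>Teichmueller character on Z_p^x: for odd p, omega(x) = lim x^(p^m);
  for p = 2, omega(x) = +-1 with omega(x) = x mod 4.\<close>
definition teich :: "nat \<Rightarrow> (nat \<Rightarrow> int) \<Rightarrow> nat \<Rightarrow> int" where
  "teich p x = (if p = 2
     then (\<lambda>k. (if x 2 = 1 then 1 else -1) mod 2 ^ k)
     else (\<lambda>k. THE r. \<forall>\<^sub>F m in sequentially. (x k) ^ (p ^ m) mod int p ^ k = r))"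

text \<open>The projection <x> = x / omega(x).\<close>
definition padic_angle :: "nat \<Rightarrow> (nat \<Rightarrow> int) \<Rightarrow> nat \<Rightarrow> int" where
  "padic_angle p x = padic_mult p x (padic_inv p (teich p x))"

end

theory Submission
  imports Defs
begin


lemma euler_int:
  fixes a :: int and n :: nat
  assumes "coprime a (int n)"
  shows "[a ^ totient n = 1] (mod int n)"
proof (cases "n = 0")
  case True then show ?thesis using assms by (simp add: cong_def)
next
  case False
  define b where "b = nat (a mod int n)"
  have ab: "int b = a mod int n" using False by (simp add: b_def)
  have "coprime (a mod int n) (int n)" using assms False by (simp add: coprime_mod_left_iff)
  hence "coprime (int b) (int n)" using ab by simp
  hence "coprime b n" by simp
  hence "[b ^ totient n = 1] (mod n)" by (rule euler_theorem)
  hence "[int b ^ totient n = int 1] (mod int n)"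
    by (metis cong_int_iff of_nat_power)
  moreover have "[a = int b] (mod int n)" using ab by (simp add: cong_def)
  ultimately show ?thesis by (metis cong_pow cong_trans of_nat_1)
qed

lemma pm_prod:
  fixes f g :: "'a \<Rightarrow> int"
  assumes "finite A" "\<And>i. i \<in> A \<Longrightarrow> \<exists>s. (s = 1 \<or> s = -1) \<and> [f i = s * g i] (mod n)"
  shows "\<exists>s. (s = 1 \<or> s = -1) \<and> [prod f A = s * prod g A] (mod n)"
  using assms
proof (induction A rule: finite_induct)
  case empty then show ?case by (intro exI[of _ 1]) simp
next
  case (insert x F)
  then obtain s where s: "s = 1 \<or> s = -1" "[prod f F = s * prod g F] (mod n)" by blast
  from insert obtain t where t: "t = 1 \<or> t = -1" "[f x = t * g x] (mod n)" by blast
  have "[f x * prod f F = (t * g x) * (s * prod g F)] (mod n)"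
    using s t cong_mult by blast
  hence "[prod f (insert x F) = (t*s) * prod g (insert x F)] (mod n)"
    using insert by (simp add: algebra_simps)
  moreover have "t * s = 1 \<or> t * s = -1" using s t by auto
  ultimately show ?case by blast
qed

lemma coprime_p_pow:
  fixes x :: int
  assumes "prime p" "\<not> int p dvd x"
  shows "coprime x (int p ^ k)"
proof -
  have "prime (int p)" using assms by simp
  hence "coprime (int p) x" using assms prime_imp_coprime by blast
  thus ?thesis by (simp add: coprime_commute)
qed

lemma coprime_p_pow':
  fixes x :: int
  assumes "prime p" "coprime x (int p)"
  shows "coprime x (int p ^ k)"
  using assms by simp

lemma odd_pr: "prime (p::nat) \<Longrightarrow> p \<noteq> 2 \<Longrightarrow> odd p"
  using prime_odd_nat[of p] prime_ge_2_nat[of p] by fastforce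

lemma pf_exists:
  fixes a b :: int
  assumes "prime p" "coprime b (int p)"
  shows "\<exists>r. 0 \<le> r \<and> r < int p ^ k \<and> [b * r = a] (mod int p ^ k)"
proof -
  have c: "coprime b (int p ^ k)" using assms by simp
  obtain x where x: "[b * x = 1] (mod int p ^ k)" using cong_solve_coprime_int[OF c] by blast
  define r where "r = (x * a) mod int p ^ k"
  have pos: "int p ^ k > 0" using assms prime_gt_0_nat by simp
  have "[b * r = b * (x * a)] (mod int p ^ k)" unfolding r_def
    by (simp add: cong_def mod_mult_right_eq)
  moreover have "[b * (x * a) = 1 * a] (mod int p ^ k)" using x
    by (metis cong_scalar_right mult.assoc)
  ultimately have "[b * r = a] (mod int p ^ k)" by (metis cong_trans mult_1)
  moreover have "0 \<le> r" "r < int p ^ k" using pos by (auto simp: r_def)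
  ultimately show ?thesis by blast
qed

lemma pf_unique_aux:
  fixes a b :: int
  assumes "prime p" "coprime b (int p)"
    and "0 \<le> r" "r < int p ^ k" "[b * r = a] (mod int p ^ k)"
    and "0 \<le> s" "s < int p ^ k" "[b * s = a] (mod int p ^ k)"
  shows "r = s"
proof -
  have c: "coprime b (int p ^ k)" using assms by simp
  have "[b * r = b * s] (mod int p ^ k)" using assms by (metis cong_sym cong_trans)
  hence "[r = s] (mod int p ^ k)" using c cong_mult_lcancel by blast
  thus ?thesis using assms cong_less_imp_eq_int by blast
qed

lemma pf_eq:
  fixes a b :: int
  assumes "prime p" "coprime b (int p)"
    and "0 \<le> r" "r < int p ^ k" "[b * r = a] (mod int p ^ k)"
  shows "padic_frac p a b k = r"
  unfolding padic_frac_def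
  apply (rule the_equality)
  using assms apply blast
  using assms pf_unique_aux by blast

lemma pf_props:
  fixes a b :: int
  assumes "prime p" "coprime b (int p)"
  shows "0 \<le> padic_frac p a b k \<and> padic_frac p a b k < int p ^ k \<and>
         [b * padic_frac p a b k = a] (mod int p ^ k)"
proof -
  obtain r where r: "0 \<le> r" "r < int p ^ k" "[b * r = a] (mod int p ^ k)"
    using pf_exists[OF assms] by blast
  thus ?thesis using pf_eq[OF assms r] by simp
qed

lemma pf_coh:
  fixes a b :: int
  assumes "prime p" "coprime b (int p)" "k \<le> K"
  shows "padic_frac p a b K mod int p ^ k = padic_frac p a b k"
proof -
  have P: "[b * padic_frac p a b K = a] (mod int p ^ K)" using pf_props[OF assms(1,2)] by blast
  have d: "int p ^ k dvd int p ^ K" using assms(3) by (simp add: le_imp_power_dvd)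
  have pos: "int p ^ k > 0" using assms prime_gt_0_nat by simp
  have "[b * (padic_frac p a b K mod int p ^ k) = b * padic_frac p a b K] (mod int p ^ k)"
    by (simp add: cong_def mod_mult_right_eq)
  moreover have "[b * padic_frac p a b K = a] (mod int p ^ k)" using P d cong_dvd_modulus by blast
  ultimately have "[b * (padic_frac p a b K mod int p ^ k) = a] (mod int p ^ k)" using cong_trans by blast
  moreover have "0 \<le> padic_frac p a b K mod int p ^ k" "padic_frac p a b K mod int p ^ k < int p ^ k"
    using pos by auto
  ultimately show ?thesis using pf_eq[OF assms(1,2)] by metis
qed



definition ff :: "nat \<Rightarrow> nat \<Rightarrow> int" where
  "ff p j = (if \<not> p dvd j then int j else 1)"

definition Gp :: "nat \<Rightarrow> nat \<Rightarrow> int" where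
  "Gp p n = (\<Prod>j\<in>{0..<n}. ff p j)"

lemma gamma_Gp: "gamma_nat p n = (-1)^n * Gp p n"
proof -
  have "{j \<in> {1..<n}. \<not> p dvd j} = {j \<in> {0..<n}. \<not> p dvd j}"
    by (auto simp: Suc_le_eq intro: Nat.gr0I)
  moreover have "(\<Prod>j\<in>{j \<in> {0..<n}. \<not> p dvd j}. int j) = (\<Prod>j\<in>{0..<n}. ff p j)"
    unfolding ff_def by (rule prod.inter_filter) simp
  ultimately have "(\<Prod>j\<in>{j \<in> {1..<n}. \<not> p dvd j}. int j) = (\<Prod>j\<in>{0..<n}. ff p j)"
    by simp
  thus ?thesis by (simp add: gamma_nat_def Gp_def)
qed

lemma Gp_Suc: "Gp p (Suc n) = Gp p n * ff p n"
  by (simp add: Gp_def)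

lemma gamma_Suc: "gamma_nat p (Suc n) = - ff p n * gamma_nat p n"
  by (simp add: gamma_Gp Gp_Suc)

lemma ff_coprime: "prime p \<Longrightarrow> coprime (ff p j) (int p)"
  unfolding ff_def
  by (metis (mono_tags, lifting) coprimeI coprime_commute of_nat_dvd_iff
    prime_imp_coprime prime_nat_int_transfer)

lemma Gp_coprime: "prime p \<Longrightarrow> coprime (Gp p n) (int p)"
  unfolding Gp_def by (rule prod_coprime_left) (simp add: ff_coprime)

lemma gamma_coprime: "prime p \<Longrightarrow> coprime (gamma_nat p n) (int p)"
  by (simp add: gamma_Gp Gp_coprime)

lemma Gp_shift:
  assumes "prime p" "m \<ge> 1"
  shows "[Gp p (n + p^m) = Gp p n * Gp p (p^m)] (mod int p ^ m)"
proof -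
  define L where "L = p ^ m"
  define Q where "Q n = (\<Prod>j\<in>{n..<n+L}. ff p j)" for n
  have pL: "p dvd L" using assms(2) by (simp add: L_def dvd_power)
  have step: "[Q (Suc n) = Q n] (mod int L)" for n
  proof -
    have "(\<Prod>j\<in>{n..<Suc (n+L)}. ff p j) = ff p n * Q (Suc n)"
      by (simp add: Q_def prod.atLeast_Suc_lessThan)
    moreover have "(\<Prod>j\<in>{n..<Suc (n+L)}. ff p j) = Q n * ff p (n + L)"
      by (simp add: Q_def)
    ultimately have e: "Q (Suc n) * ff p n = Q n * ff p (n + L)" by (simp add: mult.commute)
    have "[ff p (n + L) = ff p n] (mod int L)"
    proof (cases "p dvd n")
      case True
      hence "p dvd n + L" using pL by simp
      then show ?thesis using True by (simp add: ff_def)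
    next
      case False
      hence "\<not> p dvd n + L" using pL by (simp add: dvd_add_left_iff)
      then show ?thesis using False by (simp add: ff_def cong_def)
    qed
    hence "[Q (Suc n) * ff p n = Q n * ff p n] (mod int L)"
      using e by (metis cong_scalar_left)
    moreover have "coprime (ff p n) (int L)"
      using ff_coprime[OF assms(1)] by (simp add: L_def)
    ultimately show ?thesis using cong_mult_rcancel by blast
  qed
  have Qn: "[Q n = Q 0] (mod int L)" for n
  proof (induction n)
    case 0 then show ?case by simp
  next
    case (Suc n) then show ?case using cong_trans[OF step] by blast
  qed
  have "Gp p (n + L) = Gp p n * Q n"
    unfolding Gp_def Q_def by (rule prod.atLeastLessThan_concat[symmetric]) auto
  moreover have "Q 0 = Gp p L" by (simp add: Q_def Gp_def)
  ultimately have "[Gp p (n + L) = Gp p n * Gp p L] (mod int L)"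
    using Qn by (metis cong_scalar_left)
  thus ?thesis by (simp add: L_def)
qed



lemma Gp_mult:
  assumes "prime p" "m \<ge> 1"
  shows "[Gp p (i * p^m) = Gp p (p^m) ^ i] (mod int p ^ m)"
proof (induction i)
  case 0 then show ?case by (simp add: Gp_def)
next
  case (Suc i)
  have "[Gp p (i * p^m + p^m) = Gp p (i*p^m) * Gp p (p^m)] (mod int p ^ m)"
    using Gp_shift[OF assms] .
  moreover have "[Gp p (i*p^m) * Gp p (p^m) = Gp p (p^m) ^ i * Gp p (p^m)] (mod int p ^ m)"
    using Suc cong_scalar_right by blast
  ultimately show ?case by (simp add: add.commute mult.commute cong_trans)
qed

lemma Gp_rec:
  assumes "prime p"
  shows "[Gp p (p^(Suc m)) = Gp p (p^m) ^ p] (mod int p ^ m)"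
proof (cases "m = 0")
  case True then show ?thesis by (simp add: cong_def)
next
  case False
  have "[Gp p (p * p^m) = Gp p (p^m) ^ p] (mod int p ^ m)"
    using Gp_mult[OF assms, of m p] False by simp
  thus ?thesis by simp
qed

lemma lift_pow:
  fixes x y :: int
  assumes "prime p" "j \<ge> 1" "[x = y] (mod int p ^ j)"
  shows "[x ^ p = y ^ p] (mod int p ^ Suc j)"
proof -
  have d1: "int p ^ j dvd x - y" using assms(3) by (simp add: cong_iff_dvd_diff)
  have xy: "[x = y] (mod int p)"
    using cong_dvd_modulus[OF assms(3), of "int p"] assms(2) by (simp add: dvd_power)
  have "(\<Sum>i<p. y ^ (p - Suc i) * x ^ i) mod int p = (\<Sum>i<p. y ^ (p - Suc i) * y ^ i) mod int p"
  proof -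
    have "[(\<Sum>i<p. y ^ (p - Suc i) * x ^ i) = (\<Sum>i<p. y ^ (p - Suc i) * y ^ i)] (mod int p)"
      by (rule cong_sum) (metis cong_pow cong_scalar_left xy)
    thus ?thesis by (simp add: cong_def)
  qed
  moreover have "(\<Sum>i<p. y ^ (p - Suc i) * y ^ i) = int p * y ^ (p - 1)"
  proof -
    have "\<And>i. i < p \<Longrightarrow> y ^ (p - Suc i) * y ^ i = y ^ (p - 1)"
      by (metis One_nat_def add_diff_cancel_left' diff_Suc_1'
    diff_Suc_eq_diff_pred less_imp_Suc_add mult.commute power_add)
    thus ?thesis by simp
  qed
  ultimately have d2: "int p dvd (\<Sum>i<p. y ^ (p - Suc i) * x ^ i)"
    by auto
  have "x ^ p - y ^ p = (x - y) * (\<Sum>i<p. y ^ (p - Suc i) * x ^ i)"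
    by (rule power_diff_sumr2)
  hence "int p ^ Suc j dvd x ^ p - y ^ p"
    using mult_dvd_mono[OF d1 d2] by (simp add: mult.commute)
  thus ?thesis by (simp add: cong_iff_dvd_diff)
qed



lemma Gp_p: "prime p \<Longrightarrow> Gp p p = fact (p - 1)"
proof -
  assume pp: "prime p"
  have "Gp p p = (\<Prod>j\<in>{1..<p}. int j)"
  proof -
    have "Gp p p = (\<Prod>j\<in>{1..<p}. ff p j)"
      unfolding Gp_def using pp prime_gt_0_nat
      by (simp add: prod.atLeast_Suc_lessThan ff_def)
    also have "\<dots> = (\<Prod>j\<in>{1..<p}. int j)"
      by (rule prod.cong) (auto simp: ff_def dest: dvd_imp_le)
    finally show ?thesis .
  qed
  also have "\<dots> = fact (p - 1)"
  proof -
    have "{1..<p} = {1..p-1}" using pp prime_gt_0_nat by auto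
    thus ?thesis by (simp add: fact_prod)
  qed
  finally show ?thesis .
qed




lemma Gp_val:
  assumes "prime p"
  shows "[Gp p (p^(Suc j)) = (if p = 2 then 1 else -1)] (mod int p ^ j)"
proof -
  define c :: int where "c = (if p = 2 then 1 else -1)"
  have cp: "c ^ p = c"
  proof (cases "p = 2")
    case True then show ?thesis by (simp add: c_def)
  next
    case False
    hence "odd p" using assms odd_pr by blast
    then show ?thesis using False by (simp add: c_def)
  qed
  have m1: "[(-1::int) ^ p = c] (mod int p)"
  proof (cases "p = 2")
    case True then show ?thesis by (simp add: c_def cong_def)
  next
    case False
    hence "odd p" using assms odd_pr by blast
    then show ?thesis using False by (simp add: c_def)
  qed
  have "[Gp p (p^(Suc j)) = c] (mod int p ^ j)"
  proof (induction j)
    case 0 then show ?case by (simp add: cong_def)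
  next
    case (Suc j)
    have r: "[Gp p (p^(Suc (Suc j))) = Gp p (p^Suc j) ^ p] (mod int p ^ Suc j)"
      using Gp_rec[OF assms] .
    show ?case
    proof (cases "j = 0")
      case True
      have w: "[Gp p p = -1] (mod int p)" using Gp_p[OF assms] wilson_theorem[OF assms] by simp
      have w2: "[Gp p p ^ p = (-1) ^ p] (mod int p)" using w by (rule cong_pow)
      have "[Gp p (p^Suc j) ^ p = c] (mod int p ^ Suc j)"
        using True cong_trans[OF w2 m1] by simp
      then show ?thesis using cong_trans[OF r] by blast
    next
      case False
      have "[Gp p (p^Suc j) ^ p = c ^ p] (mod int p ^ Suc j)"
        using lift_pow[OF assms _ Suc.IH] False by simp
      hence "[Gp p (p^Suc j) ^ p = c] (mod int p ^ Suc j)" using cp by simp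
      then show ?thesis using cong_trans[OF r] by blast
    qed
  qed
  thus ?thesis by (simp add: c_def)
qed


lemma gamma_per:
  assumes "prime p"
  shows "[gamma_nat p (n + p^(Suc j)) = gamma_nat p n] (mod int p ^ j)"
proof -
  define L where "L = p ^ Suc j"
  define c :: int where "c = (if p = 2 then 1 else -1)"
  have s: "[Gp p (n + L) = Gp p n * Gp p L] (mod int p ^ j)"
    using cong_dvd_modulus[OF Gp_shift[OF assms, of "Suc j" n], of "int p ^ j"] unfolding L_def
    by (simp add: le_imp_power_dvd)
  have v: "[Gp p L = c] (mod int p ^ j)" using Gp_val[OF assms] by (simp add: L_def c_def)
  have sg: "(-1::int) ^ L * c = 1"
  proof (cases "p = 2")
    case True then show ?thesis by (simp add: c_def L_def)
  next
    case False
    hence "odd p" using assms odd_pr by blast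
    hence "odd L" by (simp add: L_def)
    then show ?thesis using False by (simp add: c_def)
  qed
  have "[gamma_nat p (n + L) = (-1)^(n+L) * (Gp p n * c)] (mod int p ^ j)"
    unfolding gamma_Gp using s v by (metis cong_scalar_left cong_trans)
  moreover have "(-1::int)^(n+L) * (Gp p n * c) = gamma_nat p n * ((-1) ^ L * c)"
    by (simp add: gamma_Gp power_add algebra_simps)
  ultimately have "[gamma_nat p (n + L) = gamma_nat p n * ((-1) ^ L * c)] (mod int p ^ j)"
    by metis
  hence "[gamma_nat p (n + L) = gamma_nat p n] (mod int p ^ j)" using sg by (metis mult_1_right)
  thus ?thesis unfolding L_def .
qed

lemma gamma_cong_nat:
  assumes "prime p" "[a = b] (mod p ^ Suc j)"
  shows "[gamma_nat p a = gamma_nat p b] (mod int p ^ j)"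
proof -
  have gen: "[gamma_nat p (a + t * p^Suc j) = gamma_nat p a] (mod int p ^ j)" for a t
  proof (induction t)
    case 0 then show ?case by simp
  next
    case (Suc t)
    have "[gamma_nat p (a + t * p^Suc j + p^Suc j) = gamma_nat p (a + t * p^Suc j)] (mod int p ^ j)"
      using gamma_per[OF assms(1)] .
    then show ?case using Suc by (metis (no_types, lifting) add.assoc add.commute mult_Suc cong_trans)
  qed
  show ?thesis
  proof (cases "a \<le> b")
    case True
    then obtain t where "b = a + t * p ^ Suc j" using assms(2)
    by (metis mod_eq_nat1E mult.commute cong_def)
    then show ?thesis using gen cong_sym by metis
  next
    case False
    then obtain t where "a = b + t * p ^ Suc j" using assms(2)
    by (metis mod_eq_nat1E mult.commute cong_def cong_sym nat_le_linear)
    then show ?thesis using gen by metis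
  qed
qed



lemma pg_eval:
  assumes "prime p" "coprime b (int p)" "Suc k \<le> K"
  shows "padic_gamma p (padic_frac p a b) k = gamma_nat p (nat (padic_frac p a b K)) mod int p ^ k"
proof -
  define x where "x = padic_frac p a b"
  define v where "v = gamma_nat p (nat (x (Suc k))) mod int p ^ k"
  have key: "gamma_nat p (nat (x m)) mod int p ^ k = v" if "Suc k \<le> m" for m
  proof -
    have "x m mod int p ^ Suc k = x (Suc k)" unfolding x_def using pf_coh[OF assms(1,2) that] .
    moreover have "x (Suc k) mod int p ^ Suc k = x (Suc k)"
      using pf_props[OF assms(1,2), of a "Suc k"] unfolding x_def by simp
    ultimately have c: "[x m = x (Suc k)] (mod int p ^ Suc k)" by (simp add: cong_def)
    have nn: "x m \<ge> 0" "x (Suc k) \<ge> 0" using pf_props[OF assms(1,2)] unfolding x_def by auto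
    have "[int (nat (x m)) = int (nat (x (Suc k)))] (mod int (p ^ Suc k))" using c nn by simp
    hence "[nat (x m) = nat (x (Suc k))] (mod p ^ Suc k)" using cong_int_iff by blast
    hence "[gamma_nat p (nat (x m)) = gamma_nat p (nat (x (Suc k)))] (mod int p ^ k)"
      using gamma_cong_nat[OF assms(1)] by blast
    thus ?thesis by (simp add: cong_def v_def)
  qed
  have ev: "\<forall>\<^sub>F m in sequentially. gamma_nat p (nat (x m)) mod int p ^ k = v"
    unfolding eventually_sequentially using key by blast
  have "padic_gamma p x k = v"
    unfolding padic_gamma_def
  proof (rule the_equality)
    show "\<forall>\<^sub>F m in sequentially. gamma_nat p (nat (x m)) mod int p ^ k = v" using ev .
  next
    fix r assume "\<forall>\<^sub>F m in sequentially. gamma_nat p (nat (x m)) mod int p ^ k = r"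
    hence "\<forall>\<^sub>F m in sequentially. gamma_nat p (nat (x m)) mod int p ^ k = r \<and>
              gamma_nat p (nat (x m)) mod int p ^ k = v" using ev eventually_conj by blast
    then obtain N0 where "\<forall>m\<ge>N0. gamma_nat p (nat (x m)) mod int p ^ k = r \<and>
              gamma_nat p (nat (x m)) mod int p ^ k = v"
      by (auto simp: eventually_sequentially)
    thus "r = v" by blast
  qed
  thus ?thesis using key[OF assms(3)] unfolding x_def by simp
qed

lemma coprime_cong_p:
  fixes a b :: int
  assumes "prime p" "k \<ge> 1" "[a = b] (mod int p ^ k)" "coprime b (int p)"
  shows "coprime a (int p)"
proof (rule ccontr)
  assume na: "\<not> coprime a (int p)"
  have pr: "prime (int p)" using assms(1) by simp
  have pa: "int p dvd a"
  proof (rule ccontr)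
    assume "\<not> int p dvd a"
    hence "coprime (int p) a" using prime_imp_coprime[OF pr] by blast
    thus False using na by (simp add: coprime_commute)
  qed
  have "int p dvd int p ^ k" using assms(2) by (simp add: dvd_power)
  moreover have "int p ^ k dvd a - b" using assms(3) by (simp add: cong_iff_dvd_diff)
  ultimately have "int p dvd a - b" by (rule dvd_trans)
  hence "int p dvd a - (a - b)" using pa by (rule dvd_diff[rotated])
  hence pb: "int p dvd b" by simp
  have "is_unit (int p)" using coprime_common_divisor[OF assms(4) pb dvd_refl] .
  thus False using pr not_prime_unit by blast
qed

definition Tf :: "nat \<Rightarrow> nat \<Rightarrow> int \<Rightarrow> int" where
  "Tf p k z = (if p = 2 then (if z mod 4 = 1 then 1 else -1) else z ^ (p ^ (2*k)))"

lemma pow_stab: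
  fixes w :: int
  assumes "prime p" "coprime w (int p)" "k \<le> e"
  shows "w ^ (p ^ e) mod int p ^ k = w ^ (p ^ k) mod int p ^ k"
  using assms(3)
proof (induction e rule: dec_induct)
  case base then show ?case by simp
next
  case (step e)
  have cop: "coprime w (int (p ^ Suc e))" using assms(2) by simp
  have "[w ^ totient (p ^ Suc e) = 1] (mod int (p ^ Suc e))"
    using euler_int[OF cop] .
  hence "[w ^ totient (p ^ Suc e) = 1] (mod int p ^ Suc e)" by simp
  hence "[w ^ (p ^ e) * w ^ totient (p ^ Suc e) = w ^ (p ^ e) * 1] (mod int p ^ Suc e)"
    by (rule cong_scalar_left)
  moreover have "w ^ (p ^ e) * w ^ totient (p ^ Suc e) = w ^ (p ^ Suc e)"
  proof -
    have "totient (p ^ Suc e) = p ^ e * (p - 1)" using totient_prime_power_Suc[OF assms(1)] .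
    moreover have "p ^ e + p ^ e * (p - 1) = p ^ Suc e"
      using prime_gt_0_nat[OF assms(1)] by (simp add: algebra_simps)
    ultimately show ?thesis by (metis power_add)
  qed
  ultimately have "[w ^ (p ^ Suc e) = w ^ (p ^ e)] (mod int p ^ Suc e)" by simp
  hence "[w ^ (p ^ Suc e) = w ^ (p ^ e)] (mod int p ^ k)"
    using cong_dvd_modulus le_imp_power_dvd step.hyps
    by (metis le_SucI)
  then show ?case using step.IH by (simp add: cong_def)
qed

lemma teich_odd:
  assumes "prime p" "p \<noteq> 2" "coprime (y k) (int p)" "k \<le> e"
  shows "teich p y k = (y k) ^ (p ^ e) mod int p ^ k"
proof -
  define v where "v = (y k) ^ (p ^ k) mod int p ^ k"
  have ev: "\<forall>\<^sub>F m in sequentially. (y k) ^ (p ^ m) mod int p ^ k = v"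
    unfolding eventually_sequentially v_def using pow_stab[OF assms(1,3)] by blast
  have tt: "teich p y k = (THE r. \<forall>\<^sub>F m in sequentially. (y k) ^ (p ^ m) mod int p ^ k = r)"
    using assms(2) by (simp add: teich_def)
  have "teich p y k = v"
    unfolding tt
  proof (rule the_equality)
    show "\<forall>\<^sub>F m in sequentially. (y k) ^ (p ^ m) mod int p ^ k = v" using ev .
  next
    fix r assume "\<forall>\<^sub>F m in sequentially. (y k) ^ (p ^ m) mod int p ^ k = r"
    hence "\<forall>\<^sub>F m in sequentially. (y k) ^ (p ^ m) mod int p ^ k = r \<and>
              (y k) ^ (p ^ m) mod int p ^ k = v" using ev eventually_conj by blast
    then obtain N0 where "\<forall>m\<ge>N0. (y k) ^ (p ^ m) mod int p ^ k = r \<and> (y k) ^ (p ^ m) mod int p ^ k = v"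
      by (auto simp: eventually_sequentially)
    thus "r = v" by blast
  qed
  thus ?thesis using pow_stab[OF assms(1,3,4)] by (simp add: v_def)
qed

lemma inv_props:
  assumes "prime p" "coprime (t k) (int p)"
  shows "0 \<le> padic_inv p t k \<and> padic_inv p t k < int p ^ k \<and> [t k * padic_inv p t k = 1] (mod int p ^ k)"
proof -
  have "padic_inv p t k = padic_frac p 1 (t k) k"
    by (simp add: padic_inv_def padic_frac_def)
  thus ?thesis using pf_props[OF assms] by simp
qed

lemma angle_char:
  assumes "prime p" "k \<ge> 1" "coprime z (int p)" "[y k = z] (mod int p ^ k)"
    and "p = 2 \<Longrightarrow> y 2 = z mod 4"
  shows "[padic_angle p y k * Tf p k z = z] (mod int p ^ k)"
proof -
  define t where "t = teich p y"
  have yk: "coprime (y k) (int p)" using coprime_cong_p[OF assms(1,2,4,3)] .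
  have tT: "[t k = Tf p k z] (mod int p ^ k)"
  proof (cases "p = 2")
    case True
    have "t k = (if y 2 = 1 then 1 else -1) mod 2 ^ k" using True by (simp add: t_def teich_def)
    moreover have "(y 2 = 1) = (z mod 4 = 1)" using assms(5) True by simp
    ultimately have e: "t k = Tf p k z mod int p ^ k" using True by (simp add: Tf_def)
    then show ?thesis by (simp add: cong_def)
  next
    case False
    have "t k = (y k) ^ (p ^ (2*k)) mod int p ^ k" unfolding t_def
      using teich_odd[of p y k "2*k"] assms(1) False yk by simp
    moreover have "[(y k) ^ (p ^ (2*k)) = z ^ (p ^ (2*k))] (mod int p ^ k)"
      using assms(4) by (rule cong_pow)
    ultimately show ?thesis using False
      by (simp add: Tf_def cong_def)
  qed
  have cT: "coprime (Tf p k z) (int p)"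
    using assms(3) by (simp add: Tf_def)
  have ct: "coprime (t k) (int p)" using coprime_cong_p[OF assms(1,2) tT cT] .
  define r where "r = padic_inv p t k"
  have r: "[t k * r = 1] (mod int p ^ k)" using inv_props[of p t k] assms(1) ct unfolding r_def by blast
  have "padic_angle p y k = (y k * r) mod int p ^ k"
    by (simp add: padic_angle_def padic_mult_def r_def t_def)
  hence "[padic_angle p y k = y k * r] (mod int p ^ k)" by (simp add: cong_def)
  hence "[padic_angle p y k * Tf p k z = (y k * r) * t k] (mod int p ^ k)"
    using cong_mult[OF _ cong_sym[OF tT]] by blast
  also have "(y k * r) * t k = y k * (t k * r)" by simp
  also have "[y k * (t k * r) = y k * 1] (mod int p ^ k)" using r by (rule cong_scalar_left)
  also have "[y k * 1 = z] (mod int p ^ k)" using assms(4) by simp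
  finally show ?thesis .
qed



lemma odd_mod4: "odd (z::int) \<Longrightarrow> z mod 4 = 1 \<or> z mod 4 = 3"
  by presburger

lemma coprime2_odd: "coprime (z::int) (int 2) \<Longrightarrow> odd z"
  by (simp add: coprime_right_2_iff_odd)

lemma Tf_coprime: "coprime z (int p) \<Longrightarrow> coprime (Tf p k z) (int p)"
  by (simp add: Tf_def)

lemma Tf_mult:
  assumes "coprime z (int p)" "coprime w (int p)"
  shows "Tf p k (z * w) = Tf p k z * Tf p k w"
proof (cases "p = 2")
  case True
  have oz: "odd z" "odd w" using assms True coprime2_odd by auto
  have m: "(z*w) mod 4 = ((z mod 4) * (w mod 4)) mod 4" by (simp add: mod_mult_eq)
  show ?thesis using odd_mod4[OF oz(1)] odd_mod4[OF oz(2)] m True by (auto simp: Tf_def)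
next
  case False then show ?thesis by (simp add: Tf_def power_mult_distrib)
qed

lemma Tf_cong:
  assumes "prime p" "[z = w] (mod int p ^ (k+2))"
  shows "[Tf p k z = Tf p k w] (mod int p ^ k)"
proof (cases "p = 2")
  case True
  have "(4::int) dvd int p ^ (k+2)" using True by (simp add: power_add)
  hence "[z = w] (mod 4)" using assms(2) cong_dvd_modulus by blast
  hence "z mod 4 = w mod 4" by (simp add: cong_def)
  then show ?thesis using True by (simp add: Tf_def)
next
  case False
  have "[z = w] (mod int p ^ k)" using assms(2)
    by (metis cong_modulus_mult power_add)
  then show ?thesis using False by (simp add: Tf_def cong_pow)
qed

lemma Tf_prod:
  assumes "finite A" "\<And>i. i \<in> A \<Longrightarrow> coprime (f i) (int p)"
  shows "Tf p k (prod f A) = (\<Prod>i\<in>A. Tf p k (f i))"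
  using assms
proof (induction A rule: finite_induct)
  case empty then show ?case by (simp add: Tf_def)
next
  case (insert x F)
  have c: "coprime (prod f F) (int p)" using insert by (simp add: prod_coprime_left)
  have "Tf p k (prod f (insert x F)) = Tf p k (f x * prod f F)" using insert by simp
  also have "\<dots> = Tf p k (f x) * Tf p k (prod f F)" using Tf_mult insert c by simp
  finally show ?case using insert by simp
qed

lemma Tf_pow:
  assumes "coprime z (int p)"
  shows "Tf p k (z ^ n) = Tf p k z ^ n"
proof (induction n)
  case 0 then show ?case by (simp add: Tf_def)
next
  case (Suc n)
  have "Tf p k (z ^ Suc n) = Tf p k (z * z ^ n)" by simp
  also have "\<dots> = Tf p k z * Tf p k (z ^ n)" using Tf_mult assms by simp
  finally show ?case using Suc by simp
qed

lemma euler_dvd: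
  fixes N :: int
  assumes "coprime N (int p)" "totient (p ^ j) dvd U"
  shows "[N ^ U = 1] (mod int p ^ j)"
proof -
  obtain t where t: "U = totient (p ^ j) * t" using assms(2) by blast
  have cop: "coprime N (int (p ^ j))" using assms(1) by simp
  have "[N ^ totient (p ^ j) = 1] (mod int (p ^ j))" using euler_int[OF cop] .
  hence "[(N ^ totient (p ^ j)) ^ t = 1 ^ t] (mod int (p ^ j))" by (rule cong_pow)
  thus ?thesis using t by (simp add: power_mult)
qed

lemma pm1_dvd: "(p::nat) \<ge> 1 \<Longrightarrow> (p - 1) dvd (p ^ n - 1)"
proof -
  assume "p \<ge> 1"
  hence "p = 1 + (p - 1)" by simp
  hence "[p = 1] (mod (p - 1))" by (metis cong_def mod_add_self2)
  hence "[p ^ n = 1 ^ n] (mod (p - 1))" by (rule cong_pow)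
  hence "[p ^ n = 1] (mod (p - 1))" by simp
  thus ?thesis by (rule cong_to_1_nat)
qed

lemma Tf_NU:
  fixes N :: int
  assumes "prime p" "coprime N (int p)" "p ^ (k+1) dvd U" "k \<ge> 1"
  shows "[Tf p k (N ^ U) = N ^ U] (mod int p ^ k)"
proof (cases "p = 2")
  case True
  have t2: "totient (p ^ 2) = 2" using totient_prime_power_Suc[OF assms(1), of 1] True by simp
  have "2 dvd U" using assms(3) True by (metis dvd_power dvd_trans add_gr_0 zero_less_one)
  hence "[N ^ U = 1] (mod int p ^ 2)" using euler_dvd[OF assms(2)] t2 by simp
  hence "(N ^ U) mod 4 = 1" using True by (simp add: cong_def)
  hence T1: "Tf p k (N ^ U) = 1" using True by (simp add: Tf_def)
  have "totient (p ^ k) dvd U"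
  proof -
    have "totient (p ^ k) = p ^ (k - 1) * (p - 1)" using totient_prime_power[OF assms(1)] assms(4) by simp
    hence "totient (p ^ k) = p ^ (k - 1)" using True by simp
    moreover have "p ^ (k - 1) dvd p ^ (k+1)" by (simp add: le_imp_power_dvd)
    ultimately show ?thesis using assms(3) dvd_trans by metis
  qed
  hence "[N ^ U = 1] (mod int p ^ k)" using euler_dvd[OF assms(2)] by simp
  then show ?thesis using T1 by (simp add: cong_sym)
next
  case False
  have p1: "p \<ge> 1" using assms(1) prime_ge_1_nat by blast
  have e: "Tf p k (N ^ U) = N ^ U * N ^ (U * (p ^ (2*k) - 1))"
  proof -
    have "p ^ (2*k) \<ge> 1" using p1 by simp
    hence "U + U * (p ^ (2*k) - 1) = U * p ^ (2*k)" by (simp add: algebra_simps)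
    thus ?thesis using False by (simp add: Tf_def power_add[symmetric] power_mult[symmetric])
  qed
  have "totient (p ^ k) dvd U * (p ^ (2*k) - 1)"
  proof -
    have "totient (p ^ k) = p ^ (k - 1) * (p - 1)" using totient_prime_power[OF assms(1)] assms(4) by simp
    moreover have "p ^ (k - 1) dvd U" using assms(3)
      by (metis dvd_trans le_imp_power_dvd diff_le_self le_add1 order_trans)
    moreover have "(p - 1) dvd (p ^ (2*k) - 1)" using pm1_dvd p1 by blast
    ultimately show ?thesis by (simp add: mult_dvd_mono)
  qed
  hence "[N ^ (U * (p ^ (2*k) - 1)) = 1] (mod int p ^ k)" using euler_dvd[OF assms(2)] by blast
  hence "[N ^ U * N ^ (U * (p ^ (2*k) - 1)) = N ^ U * 1] (mod int p ^ k)" by (rule cong_scalar_left)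
  then show ?thesis using e by simp
qed

lemma two_pow_eq1: "k \<ge> 1 \<Longrightarrow> (2::int) ^ k = 2 * 2 ^ (k - 1)"
  by (cases k) auto

lemma two_pow_eq2: "k \<ge> 1 \<Longrightarrow> (2::int) ^ (k + 1) = 4 * 2 ^ (k - 1)"
  by (cases k) auto

lemma Tf_eps:
  fixes e :: int
  assumes "prime p" "k \<ge> 1" "coprime e (int p)" "[e ^ 2 = s] (mod int p ^ (k+1))" "s = 1 \<or> s = -1"
  shows "[Tf p k e = e] (mod int p ^ k)"
proof (cases "p = 2")
  case True
  have oe: "odd e" using assms(3) True coprime2_odd by auto
  obtain a where a: "e = 2*a + 1" using oe by (metis oddE)
  have e2: "e ^ 2 - 1 = 4 * (a * (a + 1))" using a by (simp add: power2_eq_square algebra_simps)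
  have pk: "int p ^ (k+1) = 4 * 2 ^ (k - 1)" using True two_pow_eq2[OF assms(2)] by simp
  have "[e ^ 2 = s] (mod 4)" using assms(4) cong_dvd_modulus[of _ _ "int p ^ (k+1)" 4] pk by simp
  moreover have "[e ^ 2 = 1] (mod 4)" using e2 by (simp add: cong_iff_dvd_diff)
  ultimately have s1: "s = 1" using assms(5) by (auto simp: cong_def)
  have "int p ^ (k+1) dvd e ^ 2 - 1" using assms(4) s1 by (simp add: cong_iff_dvd_diff)
  hence "4 * 2 ^ (k - 1) dvd 4 * (a * (a+1))" using pk e2 by simp
  hence d: "(2::int) ^ (k - 1) dvd a * (a+1)" by (simp add: mult.commute)
  have pk2: "int p ^ k = 2 * 2 ^ (k - 1)" using True two_pow_eq1[OF assms(2)] by simp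
  show ?thesis
  proof (cases "even a")
    case True
    have "coprime (2 ^ (k-1)) (a+1)" using True by simp
    hence "(2::int) ^ (k - 1) dvd a" using d coprime_dvd_mult_left_iff by blast
    hence "2 * 2 ^ (k - 1) dvd 2 * a" by (rule mult_dvd_mono[OF dvd_refl])
    hence dd: "int p ^ k dvd e - 1" using a pk2 by simp
    show ?thesis
    proof (cases "k = 1")
      case True
      have "odd (Tf p k e)" using \<open>p = 2\<close> by (simp add: Tf_def)
      hence "[Tf p k e = e] (mod 2)" using oe by (simp add: cong_def odd_iff_mod_2_eq_one)
      then show ?thesis using True \<open>p = 2\<close> by simp
    next
      case False
      hence "4 dvd int p ^ k" using pk2 assms(2) two_pow_eq1[of "k - 1"] by simp
      hence "4 dvd e - 1" using dd dvd_trans by blast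
      hence "e mod 4 = 1" by presburger
      hence "Tf p k e = 1" using \<open>p = 2\<close> by (simp add: Tf_def)
      then show ?thesis using dd by (simp add: cong_iff_dvd_diff dvd_diff_commute)
    qed
  next
    case False
    have "coprime (2 ^ (k-1)) a" using False by simp
    hence "(2::int) ^ (k - 1) dvd a + 1" using d coprime_dvd_mult_right_iff by blast
    hence "2 * 2 ^ (k - 1) dvd 2 * (a + 1)" by (rule mult_dvd_mono[OF dvd_refl])
    hence dd: "int p ^ k dvd e + 1" using a pk2 by (simp add: algebra_simps)
    show ?thesis
    proof (cases "k = 1")
      case True
      have "odd (Tf p k e)" using \<open>p = 2\<close> by (simp add: Tf_def)
      hence "[Tf p k e = e] (mod 2)" using oe by (simp add: cong_def odd_iff_mod_2_eq_one)
      then show ?thesis using True \<open>p = 2\<close> by simp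
    next
      case False
      hence "4 dvd int p ^ k" using pk2 assms(2) two_pow_eq1[of "k - 1"] by simp
      hence "4 dvd e + 1" using dd dvd_trans by blast
      hence "e mod 4 = 3" by presburger
      hence T: "Tf p k e = -1" using \<open>p = 2\<close> by (simp add: Tf_def)
      have "-1 - e = -(e+1)" by simp
      hence "int p ^ k dvd -1 - e" using dd by (metis dvd_minus_iff)
      then show ?thesis using T by (simp add: cong_iff_dvd_diff)
    qed
  qed
next
  case False
  have "[e ^ 2 = s] (mod int p ^ k)"
    using cong_dvd_modulus[OF assms(4), of "int p ^ k"] by (simp add: le_imp_power_dvd)
  hence "[(e ^ 2) ^ 2 = s ^ 2] (mod int p ^ k)" by (rule cong_pow)
  hence e4: "[e ^ 4 = 1] (mod int p ^ k)" using assms(5) by (auto simp: power_mult[symmetric])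
  have op: "odd p" using assms(1) False odd_pr by blast
  have "[p ^ 2 = 1] (mod 4)"
  proof -
    obtain q where "p = 2*q + 1" using op by (metis oddE)
    hence "p ^ 2 = 4 * (q*q + q) + 1" by (simp add: power2_eq_square algebra_simps)
    thus ?thesis by (simp add: cong_def)
  qed
  hence "[(p ^ 2) ^ k = 1 ^ k] (mod 4)" by (rule cong_pow)
  hence "[p ^ (2*k) = 1] (mod 4)" by (simp add: power_mult)
  hence "4 dvd p ^ (2*k) - 1" by (rule cong_to_1_nat)
  then obtain t where t: "p ^ (2*k) - 1 = 4 * t" by blast
  have "p ^ (2*k) \<ge> 1" using prime_ge_1_nat[OF assms(1)] by simp
  hence pe: "p ^ (2*k) = 1 + 4 * t" using t by simp
  have "Tf p k e = e * (e ^ 4) ^ t" using False pe by (simp add: Tf_def power_add power_mult)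
  moreover have "[e * (e ^ 4) ^ t = e * 1 ^ t] (mod int p ^ k)"
    using e4 by (intro cong_scalar_left cong_pow)
  ultimately show ?thesis by simp
qed



definition uu :: "nat \<Rightarrow> nat \<Rightarrow> nat" where
  "uu p n = (\<Sum>j<n. (if p dvd j then 0 else 1))"

lemma ceil_div_step:
  assumes "(p::nat) > 0"
  shows "(Suc n + p - 1) div p = (n + p - 1) div p + (if p dvd n then 1 else 0)"
proof -
  define q where "q = n div p"
  define s where "s = n mod p"
  have n: "n = s + p * q" using q_def s_def by simp
  have sp: "s < p" using assms s_def by simp
  show ?thesis
  proof (cases "s = 0")
    case True
    hence dv: "p dvd n" using s_def by (simp add: dvd_eq_mod_eq_0)
    have a: "Suc n + p - 1 = 0 + p * (q + 1)" using n True assms by simp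
    have b: "n + p - 1 = (p - 1) + p * q" using n True assms by simp
    show ?thesis using dv assms unfolding a b by (simp only: div_mult_self2) simp
  next
    case False
    hence dv: "\<not> p dvd n" using s_def by (simp add: dvd_eq_mod_eq_0)
    have a: "Suc n + p - 1 = s + p * (q + 1)" using n False assms by simp
    have b: "n + p - 1 = (s - 1) + p * (q + 1)" using n False assms by simp
    have x1: "(s + p * (q + 1)) div p = q + 1" using assms sp by (subst div_mult_self2) auto
    have x2: "((s - 1) + p * (q + 1)) div p = q + 1" using assms sp by (subst div_mult_self2) auto
    show ?thesis using dv unfolding a b x1 x2 by simp
  qed
qed

lemma uu_formula:
  assumes "(p::nat) > 0"
  shows "uu p n + (n + p - 1) div p = n"
proof (induction n)
  case 0 then show ?case using assms by (simp add: uu_def)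
next
  case (Suc n)
  have "uu p (Suc n) = uu p n + (if p dvd n then 0 else 1)" by (simp add: uu_def)
  then show ?case using Suc ceil_div_step[OF assms, of n] by auto
qed

lemma mult_formula:
  fixes N :: nat
  assumes pp: "prime p" and m1: "m \<ge> 1" and cN: "coprime (int N) (int p)"
  shows "[int N ^ uu p n * (\<Prod>kk\<in>{0..<N}. gamma_nat p (nat (padic_frac p (int (n + kk)) (int N) m)))
          = (\<Prod>kk\<in>{0..<N}. gamma_nat p (nat (padic_frac p (int kk) (int N) m))) * gamma_nat p n]
         (mod int p ^ (m - 1))"
proof -
  define R where "R a = padic_frac p (int a) (int N) m" for a
  define F where "F n = (\<Prod>kk\<in>{0..<N}. gamma_nat p (nat (R (n + kk))))" for n
  define Q where "Q = int p ^ (m - 1)"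
  have Rp: "0 \<le> R a \<and> R a < int p ^ m \<and> [int N * R a = int a] (mod int p ^ m)" for a
    using pf_props[OF pp cN] by (simp add: R_def)
  have QL: "Q dvd int p ^ m" unfolding Q_def by (simp add: le_imp_power_dvd)
  have cQ: "coprime x Q" if "coprime x (int p)" for x using that by (simp add: Q_def)
  have "[int N ^ uu p n * F n = F 0 * gamma_nat p n] (mod Q)"
  proof (induction n)
    case 0 show ?case by (simp add: uu_def gamma_nat_def)
  next
    case (Suc n)
    define \<rho> where "\<rho> = nat (R n)"
    have rho: "int \<rho> = R n" using Rp[of n] by (simp add: \<rho>_def)
    have e1: "F (Suc n) * gamma_nat p \<rho> = F n * gamma_nat p (nat (R (n + N)))"
    proof -
      have "(\<Prod>kk\<in>{0..<Suc N}. gamma_nat p (nat (R (n + kk)))) =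
            gamma_nat p (nat (R (n + 0))) * (\<Prod>kk\<in>{0..<N}. gamma_nat p (nat (R (n + Suc kk))))"
        by (simp only: prod.atLeast0_lessThan_Suc_shift comp_def)
      moreover have "(\<Prod>kk\<in>{0..<Suc N}. gamma_nat p (nat (R (n + kk)))) =
            (\<Prod>kk\<in>{0..<N}. gamma_nat p (nat (R (n + kk)))) * gamma_nat p (nat (R (n + N)))"
        by (rule prod.atLeast0_lessThan_Suc)
      ultimately show ?thesis by (simp add: F_def \<rho>_def mult.commute)
    qed
    have "[int N * ((R n + 1) mod int p ^ m) = int (n + N)] (mod int p ^ m)"
    proof -
      have "[int N * ((R n + 1) mod int p ^ m) = int N * (R n + 1)] (mod int p ^ m)"
        by (simp add: cong_def mod_mult_right_eq)
      also have "int N * (R n + 1) = int N * R n + int N" by (simp add: algebra_simps)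
      also have "[int N * R n + int N = int n + int N] (mod int p ^ m)"
        using Rp[of n] by (intro cong_add) auto
      finally show ?thesis by simp
    qed
    hence "R (n + N) = (R n + 1) mod int p ^ m"
      unfolding R_def using pf_eq[OF pp cN] pp prime_gt_0_nat by simp
    hence c1: "[R (n + N) = R n + 1] (mod int p ^ m)" by (simp add: cong_def)
    have eq1: "int (nat (R (n + N))) = R (n + N)" using Rp[of "n+N"] by simp
    have eq2: "int (Suc \<rho>) = R n + 1" using rho by simp
    have "[int (nat (R (n + N))) = int (Suc \<rho>)] (mod int p ^ m)"
      unfolding eq1 eq2 by (rule c1)
    hence "[nat (R (n + N)) = Suc \<rho>] (mod p ^ m)"
      using cong_int_iff[of "nat (R (n + N))" "Suc \<rho>" "p ^ m"] by simp
    hence "[nat (R (n + N)) = Suc \<rho>] (mod p ^ Suc (m - 1))"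
      using m1 by simp
    hence "[gamma_nat p (nat (R (n + N))) = gamma_nat p (Suc \<rho>)] (mod Q)"
      unfolding Q_def by (rule gamma_cong_nat[OF pp])
    hence "[F (Suc n) * gamma_nat p \<rho> = F n * gamma_nat p (Suc \<rho>)] (mod Q)"
      unfolding e1 by (rule cong_scalar_left)
    hence "[F (Suc n) * gamma_nat p \<rho> = (- ff p \<rho> * F n) * gamma_nat p \<rho>] (mod Q)"
      by (simp add: gamma_Suc algebra_simps)
    hence FS: "[F (Suc n) = - ff p \<rho> * F n] (mod Q)"
      using cong_mult_rcancel[OF cQ[OF gamma_coprime[OF pp]]] by blast
    have NR: "[int N * int \<rho> = int n] (mod Q)"
      using Rp[of n] rho cong_dvd_modulus[OF _ QL] by simp
    have dv: "p dvd \<rho> \<longleftrightarrow> p dvd n"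
    proof -
      have "[int N * int \<rho> = int n] (mod int p)"
        using Rp[of n] rho m1 cong_dvd_modulus[of _ _ "int p ^ m" "int p"] by (simp add: dvd_power)
      hence "int p dvd int N * int \<rho> \<longleftrightarrow> int p dvd int n" by (simp add: cong_dvd_iff)
      moreover have "int p dvd int N * int \<rho> \<longleftrightarrow> int p dvd int \<rho>"
        using cN by (simp add: coprime_commute coprime_dvd_mult_right_iff)
      ultimately show ?thesis by simp
    qed
    show ?case
    proof (cases "p dvd n")
      case True
      have "uu p (Suc n) = uu p n" using True by (simp add: uu_def)
      moreover have "ff p \<rho> = 1" "ff p n = 1" using True dv by (auto simp: ff_def)
      ultimately have g: "gamma_nat p (Suc n) = - gamma_nat p n" "uu p (Suc n) = uu p n"
        by (auto simp: gamma_Suc)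
      have "[int N ^ uu p (Suc n) * F (Suc n) = int N ^ uu p n * (- ff p \<rho> * F n)] (mod Q)"
        using cong_scalar_left[OF FS, of "int N ^ uu p n"] g(2) by simp
      also have "int N ^ uu p n * (- ff p \<rho> * F n) = - (int N ^ uu p n * F n)"
        using \<open>ff p \<rho> = 1\<close> by simp
      also have "[- (int N ^ uu p n * F n) = - (F 0 * gamma_nat p n)] (mod Q)"
        using Suc.IH by (rule cong_minus_minus_iff[THEN iffD2])
      also have "- (F 0 * gamma_nat p n) = F 0 * gamma_nat p (Suc n)" using g by simp
      finally show ?thesis .
    next
      case False
      have u: "uu p (Suc n) = Suc (uu p n)" using False by (simp add: uu_def)
      have f: "ff p \<rho> = int \<rho>" "ff p n = int n" using False dv by (auto simp: ff_def)
      have "[int N ^ uu p (Suc n) * F (Suc n) = int N ^ Suc (uu p n) * (- ff p \<rho> * F n)] (mod Q)"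
        using cong_scalar_left[OF FS, of "int N ^ Suc (uu p n)"] u by simp
      also have "int N ^ Suc (uu p n) * (- ff p \<rho> * F n) = - (int N * int \<rho>) * (int N ^ uu p n * F n)"
        using f by (simp add: algebra_simps)
      also have "[- (int N * int \<rho>) * (int N ^ uu p n * F n) = - int n * (F 0 * gamma_nat p n)] (mod Q)"
        by (rule cong_mult[OF cong_minus_minus_iff[THEN iffD2, OF NR] Suc.IH])
      also have "- int n * (F 0 * gamma_nat p n) = F 0 * gamma_nat p (Suc n)"
        using f by (simp add: gamma_Suc algebra_simps)
      finally show ?thesis .
    qed
  qed
  thus ?thesis by (simp add: F_def R_def Q_def)
qed

lemma small_dvd_zero:
  fixes x :: int
  assumes "int p dvd x" "- int p < x" "x < int p"
  shows "x = 0"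
proof -
  obtain t where t: "x = int p * t" using assms(1) by blast
  have "p > 0" using assms by simp
  show ?thesis
  proof (cases "t = 0")
    case True then show ?thesis using t by simp
  next
    case False
    hence "t \<ge> 1 \<or> t \<le> -1" by linarith
    then show ?thesis
    proof
      assume "t \<ge> 1"
      hence "int p * 1 \<le> int p * t" by (rule mult_left_mono) simp
      thus ?thesis using t assms by linarith
    next
      assume "t \<le> -1"
      hence "int p * t \<le> int p * (-1)" by (rule mult_left_mono) simp
      thus ?thesis using t assms by linarith
    qed
  qed
qed

lemma ceil_step:
  fixes M r0 r1 :: nat
  assumes pp: "prime p" and m1: "m \<ge> 1" and cM: "coprime (int M) (int p)"
    and r: "r0 < M" "r1 < M" "[int r1 = int p * int r0] (mod int M)"
  shows "int p ^ (m - 1) dvd (padic_frac p (int r1) (int M) m + int p - 1) div int p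
            - padic_frac p (int r0) (int M) m"
proof -
  define n1 where "n1 = padic_frac p (int r1) (int M) m"
  define n0 where "n0 = padic_frac p (int r0) (int M) m"
  define c where "c = (n1 + int p - 1) div int p"
  define \<delta> where "\<delta> = int p * c - n1"
  have P1: "0 \<le> n1" "[int M * n1 = int r1] (mod int p ^ m)" using pf_props[OF pp cM] unfolding n1_def by auto
  have P0: "[int M * n0 = int r0] (mod int p ^ m)" using pf_props[OF pp cM] unfolding n0_def by auto
  have p0: "int p > 0" using pp prime_gt_0_nat by simp
  have dm: "n1 + int p - 1 = int p * c + (n1 + int p - 1) mod int p" unfolding c_def by simp
  have "0 \<le> (n1 + int p - 1) mod int p" "(n1 + int p - 1) mod int p < int p" using p0 by auto
  hence d1: "0 \<le> \<delta>" "\<delta> < int p" using dm unfolding \<delta>_def by linarith+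
  have "int M dvd int r1 - int p * int r0" using r(3) by (simp add: cong_iff_dvd_diff)
  then obtain e where e: "int r1 - int p * int r0 = int M * e" by (rule dvdE)
  have M0: "M > 0" using r by simp
  have e1: "e \<le> 0"
  proof -
    have "0 \<le> int p * int r0" by simp
    hence "int M * e < int M * 1" using e r(2) by linarith
    hence "e < 1" by (rule mult_left_less_imp_less) simp
    thus ?thesis by simp
  qed
  have e2: "- int p < e"
  proof -
    have "int p * int r0 < int p * int M" using r(1) p0 by (intro mult_strict_left_mono) auto
    hence "int M * (- int p) < int M * e" using e by (simp add: algebra_simps)
    thus ?thesis by (rule mult_left_less_imp_less) simp
  qed
  have "int p dvd int M * (\<delta> + e)"
  proof -
    have "int p ^ m dvd int M * n1 - int r1" using P1(2) by (simp add: cong_iff_dvd_diff)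
    moreover have "int p dvd int p ^ m" using m1 by (simp add: dvd_power)
    ultimately have d: "int p dvd int M * n1 - int r1" using dvd_trans by blast
    have "int M * (\<delta> + e) = int p * (int M * c - int r0) - (int M * n1 - int r1)"
      using e unfolding \<delta>_def by (simp add: algebra_simps)
    thus ?thesis using d by simp
  qed
  hence "int p dvd \<delta> + e" using cM by (simp add: coprime_commute coprime_dvd_mult_right_iff)
  hence de: "\<delta> + e = 0" by (rule small_dvd_zero) (use d1 e1 e2 in linarith)+
  have ee: "e = n1 - int p * c" using de unfolding \<delta>_def by simp
  have "int M * (int p * c) = int M * n1 - (int r1 - int p * int r0)"
    unfolding e ee by (simp add: algebra_simps)
  moreover have "[int M * n1 - (int r1 - int p * int r0) = int r1 - (int r1 - int p * int r0)] (mod int p ^ m)"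
    using P1(2) cong_refl by (rule cong_diff)
  ultimately have "[int M * (int p * c) = int r1 - (int r1 - int p * int r0)] (mod int p ^ m)" by simp
  hence A: "[int p * (int M * c) = int p * int r0] (mod int p ^ m)" by (simp add: algebra_simps)
  have B: "[int p * (int M * n0) = int p * int r0] (mod int p ^ m)" using P0 by (rule cong_scalar_left)
  have "[int p * (int M * c) = int p * (int M * n0)] (mod int p ^ m)" using cong_trans[OF A cong_sym[OF B]] .
  hence X: "int p ^ m dvd int p * (int M * c) - int p * (int M * n0)" by (simp add: cong_iff_dvd_diff)
  have Y: "int p * (int M * c) - int p * (int M * n0) = int p * (int M * (c - n0))"
    by (simp add: algebra_simps)
  have pm: "int p ^ m = int p * int p ^ (m - 1)" using m1
    by (cases m) auto
  have "int p * int p ^ (m - 1) dvd int p * (int M * (c - n0))"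
    using X unfolding Y pm .
  hence "int p ^ (m - 1) dvd int M * (c - n0)" using p0 by (simp add: dvd_times_left_cancel_iff)
  hence "int p ^ (m - 1) dvd c - n0" using cM by (simp add: coprime_commute coprime_dvd_mult_right_iff)
  thus ?thesis by (simp add: c_def n1_def n0_def)
qed



lemma neg1_pow: "(-1::int) ^ n = 1 \<or> (-1::int) ^ n = -1"
  by (cases "even n") auto

lemma refl_gamma:
  assumes pp: "prime p" and m1: "m \<ge> 1" and a: "1 \<le> a" "a \<le> p ^ m"
  shows "\<exists>s. (s = 1 \<or> s = -1) \<and>
           [gamma_nat p a * gamma_nat p (p ^ m + 1 - a) = s] (mod int p ^ (m - 1))"
proof -
  define L where "L = p ^ m"
  have pL: "p dvd L" using m1 by (simp add: L_def dvd_power)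
  have g1: "Gp p (L + 1 - a) = (\<Prod>j\<in>{1..<L + 1 - a}. ff p j)"
  proof -
    have "0 < L + 1 - a" using a L_def by simp
    hence "Gp p (L + 1 - a) = ff p 0 * (\<Prod>j\<in>{Suc 0..<L + 1 - a}. ff p j)"
      unfolding Gp_def by (simp add: prod.atLeast_Suc_lessThan)
    thus ?thesis by (simp add: ff_def)
  qed
  have g2: "(\<Prod>j\<in>{1..<L + 1 - a}. ff p j) = (\<Prod>i\<in>{a..<L}. ff p (L - i))"
  proof -
    have "bij_betw (\<lambda>i. L - i) {a..<L} {1..<L + 1 - a}"
      by (rule bij_betw_byWitness[where f' = "\<lambda>j. L - j"]) (use a in \<open>auto simp: L_def\<close>)
    thus ?thesis by (rule prod.reindex_bij_betw[symmetric])
  qed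
  have "\<exists>s. (s = 1 \<or> s = -1) \<and> [(\<Prod>i\<in>{a..<L}. ff p (L - i)) = s * (\<Prod>i\<in>{a..<L}. ff p i)] (mod int L)"
  proof (rule pm_prod)
    fix i assume i: "i \<in> {a..<L}"
    show "\<exists>s. (s = 1 \<or> s = -1) \<and> [ff p (L - i) = s * ff p i] (mod int L)"
    proof (cases "p dvd i")
      case True
      hence "p dvd L - i" using pL by (simp add: dvd_diff_nat)
      thus ?thesis using True by (intro exI[of _ 1]) (simp add: ff_def)
    next
      case False
      have "\<not> p dvd L - i"
      proof
        assume "p dvd L - i"
        hence "p dvd L - (L - i)" using pL by (simp add: dvd_diff_nat)
        thus False using False i by simp
      qed
      hence "ff p (L - i) = int L - int i" using False i by (simp add: ff_def of_nat_diff)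
      moreover have "[int L - int i = -1 * int i] (mod int L)" by (simp add: cong_def)
      ultimately show ?thesis using False by (intro exI[of _ "-1"]) (simp add: ff_def)
    qed
  qed simp
  then obtain s where s: "s = 1 \<or> s = -1"
    "[(\<Prod>i\<in>{a..<L}. ff p (L - i)) = s * (\<Prod>i\<in>{a..<L}. ff p i)] (mod int L)" by blast
  have cat: "Gp p a * (\<Prod>i\<in>{a..<L}. ff p i) = Gp p L"
    unfolding Gp_def using a by (intro prod.atLeastLessThan_concat) (auto simp: L_def)
  have QL: "int p ^ (m - 1) dvd int L" by (simp add: L_def le_imp_power_dvd)
  define c :: int where "c = (if p = 2 then 1 else -1)"
  have cv: "[Gp p L = c] (mod int p ^ (m - 1))"
    using Gp_val[OF pp, of "m - 1"] m1 by (simp add: L_def c_def)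
  have "[Gp p a * Gp p (L + 1 - a) = Gp p a * (s * (\<Prod>i\<in>{a..<L}. ff p i))] (mod int L)"
    unfolding g1 g2 using s(2) by (rule cong_scalar_left)
  also have "Gp p a * (s * (\<Prod>i\<in>{a..<L}. ff p i)) = s * Gp p L" using cat by (simp add: algebra_simps)
  finally have "[Gp p a * Gp p (L + 1 - a) = s * Gp p L] (mod int p ^ (m - 1))"
    by (rule cong_dvd_modulus[OF _ QL])
  also have "[s * Gp p L = s * c] (mod int p ^ (m - 1))" using cv by (rule cong_scalar_left)
  finally have G2: "[Gp p a * Gp p (L + 1 - a) = s * c] (mod int p ^ (m - 1))" .
  have E0: "gamma_nat p a * gamma_nat p (L + 1 - a) = (-1) ^ (a + (L + 1 - a)) * (Gp p a * Gp p (L + 1 - a))"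
    by (simp only: gamma_Gp power_add mult_ac)
  have "a + (L + 1 - a) = L + 1" using a L_def by simp
  hence E1: "gamma_nat p a * gamma_nat p (L + 1 - a) = (-1) ^ (L + 1) * (Gp p a * Gp p (L + 1 - a))"
    using E0 by simp
  have "[gamma_nat p a * gamma_nat p (L + 1 - a) = (-1) ^ (L + 1) * (s * c)] (mod int p ^ (m - 1))"
    unfolding E1 by (rule cong_scalar_left[OF G2])
  moreover have "(-1) ^ (L + 1) * (s * c) = 1 \<or> (-1) ^ (L + 1) * (s * c) = -1"
    using neg1_pow[of "L+1"] s(1) by (auto simp: c_def)
  ultimately show ?thesis unfolding L_def by blast
qed

lemma pos_mult_lt2:
  fixes L t :: int
  assumes "L > 0" "0 < L * t" "L * t < 2 * L"
  shows "t = 1"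
proof -
  have "t > 0" using assms(1,2) by (metis zero_less_mult_pos)
  moreover have "L * t < L * 2" using assms by (simp add: mult.commute)
  hence "t < 2" by (rule mult_left_less_imp_less) (use assms in simp)
  ultimately show ?thesis by simp
qed

lemma eps_sq:
  fixes N :: nat
  assumes pp: "prime p" and m1: "m \<ge> 1" and cN: "coprime (int N) (int p)" and NL: "N < p ^ m"
  shows "\<exists>s. (s = 1 \<or> s = -1) \<and>
     [(\<Prod>kk\<in>{0..<N}. gamma_nat p (nat (padic_frac p (int kk) (int N) m))) ^ 2 = s] (mod int p ^ (m - 1))"
proof -
  define L where "L = p ^ m"
  define al where "al kk = padic_frac p (int kk) (int N) m" for kk
  define a where "a kk = nat (al kk)" for kk
  have Rp: "0 \<le> al x \<and> al x < int L \<and> [int N * al x = int x] (mod int L)" for x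
    using pf_props[OF pp cN] by (simp add: al_def L_def)
  have cNL: "coprime (int N) (int L)" using cN by (simp add: L_def)
  have nz: "al x \<noteq> 0" if "1 \<le> x" "x < N" for x
  proof
    assume "al x = 0"
    hence "[0 = int x] (mod int L)" using Rp[of x] by simp
    hence "[int x = 0] (mod int L)" by (rule cong_sym)
    hence "int L dvd int x" by (simp add: cong_0_iff)
    hence "L dvd x" by simp
    hence "L \<le> x" using that by (intro dvd_imp_le) auto
    thus False using that NL L_def by linarith
  qed
  have pair: "a (N - x) = L + 1 - a x \<and> 1 \<le> a x \<and> a x \<le> L" if x: "1 \<le> x" "x < N" for x
  proof -
    have "[int N * (al x + al (N - x)) = int N * 1] (mod int L)"
    proof -
      have "[int N * al x + int N * al (N - x) = int x + int (N - x)] (mod int L)"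
        using Rp by (intro cong_add) auto
      moreover have "int x + int (N - x) = int N * 1" using x by simp
      ultimately show ?thesis by (simp add: algebra_simps)
    qed
    hence "[al x + al (N - x) = 1] (mod int L)" using cong_mult_lcancel[OF cNL] by blast
    hence dv: "int L dvd al x + al (N - x) - 1" by (simp add: cong_iff_dvd_diff)
    then obtain t where t: "al x + al (N - x) - 1 = int L * t" by blast
    have xx: "1 \<le> N - x" "N - x < N" using x by auto
    have n1: "al x \<ge> 1" "al (N - x) \<ge> 1" using nz[OF x] nz[OF xx] Rp[of x] Rp[of "N-x"] by auto
    have l0: "int L > 0" using pp prime_gt_0_nat L_def by simp
    have l1: "0 < int L * t" using t n1 by linarith
    have l2: "int L * t < 2 * int L" using t Rp[of x] Rp[of "N - x"] by linarith
    have "t = 1" by (rule pos_mult_lt2[OF l0 l1 l2])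
    hence "al x + al (N - x) = int L + 1" using t by simp
    thus ?thesis using n1 Rp[of x] Rp[of "N-x"] unfolding a_def by auto
  qed
  define G where "G kk = gamma_nat p (a kk)" for kk
  have a0: "al 0 = 0" unfolding al_def using pf_eq[OF pp cN, of 0 m 0] pp prime_gt_0_nat by simp
  show ?thesis
  proof (cases "N = 0")
    case True then show ?thesis by (intro exI[of _ 1]) (simp add: cong_def)
  next
    case False
    have eps: "(\<Prod>kk\<in>{0..<N}. G kk) = (\<Prod>kk\<in>{1..<N}. G kk)"
    proof -
      have "(\<Prod>kk\<in>{0..<N}. G kk) = G 0 * (\<Prod>kk\<in>{Suc 0..<N}. G kk)"
        using False by (simp add: prod.atLeast_Suc_lessThan)
      moreover have "G 0 = 1" using a0 by (simp add: G_def a_def gamma_nat_def)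
      ultimately show ?thesis by simp
    qed
    have re: "(\<Prod>kk\<in>{1..<N}. G (N - kk)) = (\<Prod>kk\<in>{1..<N}. G kk)"
    proof -
      have "bij_betw (\<lambda>kk. N - kk) {1..<N} {1..<N}"
        by (rule bij_betw_byWitness[where f' = "\<lambda>kk. N - kk"]) auto
      thus ?thesis by (rule prod.reindex_bij_betw)
    qed
    have "(\<Prod>kk\<in>{0..<N}. G kk) ^ 2 = (\<Prod>kk\<in>{1..<N}. G kk * G (N - kk))"
      unfolding eps power2_eq_square prod.distrib re ..
    moreover have "\<exists>s. (s = 1 \<or> s = -1) \<and>
        [(\<Prod>kk\<in>{1..<N}. G kk * G (N - kk)) = s * (\<Prod>kk\<in>{1..<N}. 1)] (mod int p ^ (m - 1))"
    proof (rule pm_prod)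
      fix x assume "x \<in> {1..<N}"
      hence x: "1 \<le> x" "x < N" by auto
      obtain s where "s = 1 \<or> s = -1" "[gamma_nat p (a x) * gamma_nat p (L + 1 - a x) = s] (mod int p ^ (m - 1))"
        using refl_gamma[OF pp m1, of "a x"] pair[OF x] L_def by blast
      thus "\<exists>s. (s = 1 \<or> s = -1) \<and> [G x * G (N - x) = s * 1] (mod int p ^ (m - 1))"
        using pair[OF x] by (auto simp: G_def)
    qed simp
    ultimately show ?thesis by (simp add: G_def a_def al_def)
  qed
qed



lemma orbit_sum:
  fixes M d :: nat
  assumes pp: "prime p" and m1: "m \<ge> 1" and cM: "coprime M p" and M1: "M > 1"
  shows "int p ^ (m - 1) dvd
    int (\<Sum>j\<in>{0..<ord M p}. uu p (nat (padic_frac p (int ((p ^ j * d) mod M)) (int M) m)))"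
proof -
  define \<nu> where "\<nu> = ord M p"
  have \<nu>: "\<nu> > 0" "[p ^ \<nu> = 1] (mod M)" using coprime_ord[OF cM] \<nu>_def by auto
  define r where "r j = (p ^ j * d) mod M" for j
  define n where "n j = padic_frac p (int (r j)) (int M) m" for j
  define c where "c j = (n j + int p - 1) div int p" for j
  define pr where "pr j = (if j = 0 then \<nu> - 1 else j - 1)" for j
  have cMi: "coprime (int M) (int p)" using cM by simp
  have p0: "p > 0" using pp prime_gt_0_nat by blast
  have n0: "n j \<ge> 0" for j using pf_props[OF pp cMi] n_def by auto
  have uj: "int (uu p (nat (n j))) = n j - c j" for j
  proof -
    have "uu p (nat (n j)) + (nat (n j) + p - 1) div p = nat (n j)" using uu_formula p0 by blast
    hence e: "int (uu p (nat (n j))) + int ((nat (n j) + p - 1) div p) = int (nat (n j))"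
      by (metis of_nat_add)
    have "int ((nat (n j) + p - 1) div p) = int (nat (n j) + p - 1) div int p" by (simp add: zdiv_int)
    also have "int (nat (n j) + p - 1) = n j + int p - 1" using n0[of j] p0 by (simp add: of_nat_diff)
    finally have "int ((nat (n j) + p - 1) div p) = c j" by (simp add: c_def)
    thus ?thesis using e n0[of j] by simp
  qed
  have rel: "[int (r j) = int p * int (r (pr j))] (mod int M)" if "j < \<nu>" for j
  proof -
    have a: "[p * r (pr j) = p * (p ^ pr j * d)] (mod M)" by (simp add: r_def cong_def mod_mult_right_eq)
    have "[r j = p * r (pr j)] (mod M)"
    proof (cases "j = 0")
      case True
      have "pr j = \<nu> - 1" using True pr_def by simp
      moreover have "Suc (\<nu> - 1) = \<nu>" using \<nu>(1) by simp
      ultimately have pj: "p * p ^ pr j = p ^ \<nu>" by (metis power_Suc)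
      have eqX: "p * (p ^ pr j * d) = p ^ \<nu> * d" by (metis mult.assoc pj)
      have "[p ^ \<nu> * d = 1 * d] (mod M)" using \<nu>(2) by (rule cong_scalar_right)
      hence "[p * r (pr j) = 1 * d] (mod M)" using a unfolding eqX by (rule cong_trans[rotated])
      hence "[p * r (pr j) = d] (mod M)" by simp
      moreover have "[r j = d] (mod M)" using True by (simp add: r_def cong_def)
      ultimately show ?thesis by (metis cong_sym cong_trans)
    next
      case False
      have "pr j = j - 1" using False pr_def by simp
      moreover have "Suc (j - 1) = j" using False by simp
      ultimately have pj: "p * p ^ pr j = p ^ j" by (metis power_Suc)
      have eqX: "p * (p ^ pr j * d) = p ^ j * d" by (metis mult.assoc pj)
      have "[p * r (pr j) = p ^ j * d] (mod M)" using a unfolding eqX .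
      moreover have "[r j = p ^ j * d] (mod M)" by (simp add: r_def cong_def)
      ultimately show ?thesis by (metis cong_sym cong_trans)
    qed
    hence "[int (r j) = int (p * r (pr j))] (mod int M)" using cong_int_iff by blast
    thus ?thesis by simp
  qed
  have dv: "int p ^ (m - 1) dvd c j - n (pr j)" if "j < \<nu>" for j
  proof -
    have "r j < M" "r (pr j) < M" using M1 by (auto simp: r_def)
    thus ?thesis using ceil_step[OF pp m1 cMi _ _ rel[OF that]] unfolding c_def n_def by blast
  qed
  have bij: "bij_betw pr {0..<\<nu>} {0..<\<nu>}"
    by (rule bij_betw_byWitness[where f' = "\<lambda>j. if j = \<nu> - 1 then 0 else j + 1"])
       (use \<nu>(1) in \<open>auto simp: pr_def\<close>)
  have sre: "(\<Sum>j\<in>{0..<\<nu>}. n (pr j)) = (\<Sum>j\<in>{0..<\<nu>}. n j)"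
    using bij by (rule sum.reindex_bij_betw)
  have "int (\<Sum>j\<in>{0..<\<nu>}. uu p (nat (n j))) = (\<Sum>j\<in>{0..<\<nu>}. n j - c j)"
    by (simp add: uj)
  also have "\<dots> = (\<Sum>j\<in>{0..<\<nu>}. n j) - (\<Sum>j\<in>{0..<\<nu>}. c j)" by (simp add: sum_subtractf)
  also have "\<dots> = - (\<Sum>j\<in>{0..<\<nu>}. c j - n (pr j))" using sre by (simp add: sum_subtractf)
  finally have "int (\<Sum>j\<in>{0..<\<nu>}. uu p (nat (n j))) = - (\<Sum>j\<in>{0..<\<nu>}. c j - n (pr j))" .
  moreover have "int p ^ (m - 1) dvd (\<Sum>j\<in>{0..<\<nu>}. c j - n (pr j))"
    using dv by (intro dvd_sum) auto
  ultimately show ?thesis by (simp add: n_def r_def \<nu>_def)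
qed



lemma N_lt_pow: "prime p \<Longrightarrow> N < p ^ (k + 3 + N)"
proof -
  assume pp: "prime p"
  have "N < 2 ^ N" by (rule less_exp)
  also have "(2::nat) ^ N \<le> p ^ N" by (rule power_mono) (use prime_ge_2_nat[OF pp] in auto)
  also have "p ^ N \<le> p ^ (k + 3 + N)" by (rule power_increasing) (use prime_ge_1_nat[OF pp] in auto)
  finally show ?thesis .
qed

theorem mainTheorem14:
  fixes p M N d :: nat
  assumes "prime p" and "M > 1" and "coprime M p"
    and "N > 1" and "coprime N (p * M)"
    and "d < M" and "coprime d M"
  shows "padic_prod p
           (\<lambda>j. padic_prod p
              (\<lambda>k. padic_angle p (padic_gamma p
                 (padic_frac p (int ((p ^ j * d) mod M + k * M)) (int (M * N))))) {0..<N})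
           {0..<ord M p}
       = padic_prod p
           (\<lambda>j. padic_angle p (padic_gamma p
              (padic_frac p (int ((p ^ j * d) mod M)) (int M))))
           {0..<ord M p}"
proof (rule ext)
  fix k
  note pp = assms(1)
  define J where "J = {0..<ord M p}"
  define K where "K = {0..<N}"
  define r where "r j = (p ^ j * d) mod M" for j
  define q where "q = int p ^ k"
  define xz where "xz j kk = padic_frac p (int (r j + kk * M)) (int (M * N))" for j kk
  define xw where "xw j = padic_frac p (int (r j)) (int M)" for j
  define A where "A j kk = padic_angle p (padic_gamma p (xz j kk)) k" for j kk
  define B where "B j = padic_angle p (padic_gamma p (xw j)) k" for j
  have LHS: "padic_prod p
           (\<lambda>j. padic_prod p
              (\<lambda>k. padic_angle p (padic_gamma p
                 (padic_frac p (int ((p ^ j * d) mod M + k * M)) (int (M * N))))) {0..<N})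
           {0..<ord M p} k = (\<Prod>j\<in>J. \<Prod>kk\<in>K. A j kk) mod q"
    by (simp add: padic_prod_def A_def xz_def r_def J_def K_def q_def mod_prod_eq)
  have RHS: "padic_prod p
           (\<lambda>j. padic_angle p (padic_gamma p
              (padic_frac p (int ((p ^ j * d) mod M)) (int M))))
           {0..<ord M p} k = (\<Prod>j\<in>J. B j) mod q"
    by (simp add: padic_prod_def B_def xw_def r_def J_def q_def)
  show "padic_prod p
           (\<lambda>j. padic_prod p
              (\<lambda>k. padic_angle p (padic_gamma p
                 (padic_frac p (int ((p ^ j * d) mod M + k * M)) (int (M * N))))) {0..<N})
           {0..<ord M p} k =
        padic_prod p
           (\<lambda>j. padic_angle p (padic_gamma p
              (padic_frac p (int ((p ^ j * d) mod M)) (int M))))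
           {0..<ord M p} k"
  proof (cases "k = 0")
    case True
    then show ?thesis unfolding LHS RHS by (simp add: q_def)
  next
    case False
    hence k1: "k \<ge> 1" by simp
    define m where "m = k + 3 + N"
    define Q where "Q = int p ^ (m - 1)"
    define z where "z j kk = gamma_nat p (nat (xz j kk m))" for j kk
    define w where "w j = gamma_nat p (nat (xw j m))" for j
    define eps where "eps = (\<Prod>kk\<in>{0..<N}. gamma_nat p (nat (padic_frac p (int kk) (int N) m)))"
    define u where "u j = uu p (nat (xw j m))" for j
    define U where "U = (\<Sum>j\<in>J. u j)"
    have m1: "m \<ge> 1" by (simp add: m_def)
    have cMp: "coprime (int M) (int p)" using assms(3) by simp
    have cNp': "coprime N p" using assms(5) by simp
    hence cNp: "coprime (int N) (int p)" by simp
    have cMNp: "coprime (int (M * N)) (int p)" using cNp' assms(3) by simp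
    have Qk2: "int p ^ (k + 2) dvd Q" unfolding Q_def m_def by (simp add: le_imp_power_dvd)
    have Qk1: "int p ^ (k + 1) dvd Q" unfolding Q_def m_def by (simp add: le_imp_power_dvd)
    have Qq: "q dvd Q" unfolding Q_def q_def m_def by (simp add: le_imp_power_dvd)
    have zc: "coprime (z j kk) (int p)" for j kk unfolding z_def by (rule gamma_coprime[OF pp])
    have wc: "coprime (w j) (int p)" for j unfolding w_def by (rule gamma_coprime[OF pp])
    have hA: "[A j kk * Tf p k (z j kk) = z j kk] (mod q)" for j kk
    proof -
      have e1: "padic_gamma p (xz j kk) k = z j kk mod int p ^ k"
        unfolding xz_def z_def by (rule pg_eval[OF pp cMNp]) (simp add: m_def)
      have e2: "p = 2 \<Longrightarrow> padic_gamma p (xz j kk) 2 = z j kk mod 4"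
        using pg_eval[OF pp cMNp, of 2 m] unfolding xz_def z_def by (simp add: m_def)
      show ?thesis unfolding A_def q_def
        by (rule angle_char[OF pp k1 zc]) (use e1 e2 in \<open>auto simp: cong_def\<close>)
    qed
    have hB: "[B j * Tf p k (w j) = w j] (mod q)" for j
    proof -
      have e1: "padic_gamma p (xw j) k = w j mod int p ^ k"
        unfolding xw_def w_def by (rule pg_eval[OF pp cMp]) (simp add: m_def)
      have e2: "p = 2 \<Longrightarrow> padic_gamma p (xw j) 2 = w j mod 4"
        using pg_eval[OF pp cMp, of 2 m] unfolding xw_def w_def by (simp add: m_def)
      show ?thesis unfolding B_def q_def
        by (rule angle_char[OF pp k1 wc]) (use e1 e2 in \<open>auto simp: cong_def\<close>)
    qed
    have hMF: "[int N ^ u j * (\<Prod>kk\<in>K. z j kk) = eps * w j] (mod Q)" for j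
    proof -
      define n where "n = nat (xw j m)"
      have xwp: "0 \<le> xw j m" "[int M * xw j m = int (r j)] (mod int p ^ m)"
        using pf_props[OF pp cMp] unfolding xw_def by auto
      have "padic_frac p (int (n + kk)) (int N) m = xz j kk m" for kk
      proof -
        have P: "0 \<le> xz j kk m" "xz j kk m < int p ^ m"
          "[int (M * N) * xz j kk m = int (r j + kk * M)] (mod int p ^ m)"
          using pf_props[OF pp cMNp] unfolding xz_def by auto
        have "[int M * (int N * xz j kk m) = int M * int (n + kk)] (mod int p ^ m)"
        proof -
          have "[int M * (int N * xz j kk m) = int (r j) + int M * int kk] (mod int p ^ m)"
            using P(3) by (simp add: algebra_simps)
          also have "[int (r j) + int M * int kk = int M * xw j m + int M * int kk] (mod int p ^ m)"
            by (rule cong_add[OF cong_sym[OF xwp(2)] cong_refl])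
          also have "int M * xw j m + int M * int kk = int M * int (n + kk)"
            using xwp(1) by (simp add: n_def algebra_simps)
          finally show ?thesis .
        qed
        hence "[int N * xz j kk m = int (n + kk)] (mod int p ^ m)"
          using cong_mult_lcancel[of "int M" "int p ^ m"] cMp by simp
        thus ?thesis using pf_eq[OF pp cNp] P(1,2) by blast
      qed
      hence "(\<Prod>kk\<in>{0..<N}. gamma_nat p (nat (padic_frac p (int (n + kk)) (int N) m))) = (\<Prod>kk\<in>K. z j kk)"
        by (simp add: K_def z_def)
      moreover have "gamma_nat p n = w j" by (simp add: n_def w_def)
      ultimately show ?thesis
        using mult_formula[OF pp m1 cNp, of n] by (simp add: u_def n_def eps_def Q_def)
    qed
    have h3: "[int N ^ U * (\<Prod>j\<in>J. \<Prod>kk\<in>K. z j kk) = eps ^ ord M p * (\<Prod>j\<in>J. w j)] (mod Q)"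
    proof -
      have "[(\<Prod>j\<in>J. int N ^ u j * (\<Prod>kk\<in>K. z j kk)) = (\<Prod>j\<in>J. eps * w j)] (mod Q)"
        using hMF by (rule cong_prod)
      moreover have "(\<Prod>j\<in>J. int N ^ u j * (\<Prod>kk\<in>K. z j kk)) = int N ^ U * (\<Prod>j\<in>J. \<Prod>kk\<in>K. z j kk)"
        by (simp add: prod.distrib U_def power_sum)
      moreover have "(\<Prod>j\<in>J. eps * w j) = eps ^ ord M p * (\<Prod>j\<in>J. w j)"
        by (simp add: prod.distrib J_def)
      ultimately show ?thesis by simp
    qed
    have Ud: "p ^ (k + 1) dvd U"
    proof -
      have "int p ^ (m - 1) dvd int U"
        using orbit_sum[OF pp m1 assms(3) assms(2), of d]
        unfolding U_def u_def xw_def r_def J_def by simp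
      hence "p ^ (m - 1) dvd U" by (metis of_nat_dvd_iff of_nat_power)
      moreover have "p ^ (k + 1) dvd p ^ (m - 1)" by (simp add: le_imp_power_dvd m_def)
      ultimately show ?thesis using dvd_trans by blast
    qed
    obtain s where s: "s = 1 \<or> s = -1" "[eps ^ 2 = s] (mod Q)"
    proof -
      have "N < p ^ m" unfolding m_def by (rule N_lt_pow[OF pp])
      thus ?thesis using eps_sq[OF pp m1 cNp] that unfolding eps_def Q_def by blast
    qed
    have epsc: "coprime eps (int p)" unfolding eps_def
      by (rule prod_coprime_left) (simp add: gamma_coprime[OF pp])
    have "[eps ^ 2 = s] (mod int p ^ (k + 1))" by (rule cong_dvd_modulus[OF s(2) Qk1])
    hence h8: "[Tf p k eps = eps] (mod q)"
      unfolding q_def using Tf_eps[OF pp k1 epsc _ s(1)] by blast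
    have NUc: "coprime (int N ^ U) (int p)" using cNp by simp
    have h7: "[Tf p k (int N ^ U) = int N ^ U] (mod q)"
      unfolding q_def using Tf_NU[OF pp cNp Ud k1] .
    define Z where "Z = (\<Prod>j\<in>J. \<Prod>kk\<in>K. z j kk)"
    define W where "W = (\<Prod>j\<in>J. w j)"
    define TZ where "TZ = (\<Prod>j\<in>J. \<Prod>kk\<in>K. Tf p k (z j kk))"
    define TW where "TW = (\<Prod>j\<in>J. Tf p k (w j))"
    define AA where "AA = (\<Prod>j\<in>J. \<Prod>kk\<in>K. A j kk)"
    define BB where "BB = (\<Prod>j\<in>J. B j)"
    have Zc: "coprime Z (int p)" unfolding Z_def
      by (intro prod_coprime_left) (simp add: zc)
    have Wc: "coprime W (int p)" unfolding W_def
      by (intro prod_coprime_left) (simp add: wc)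
    have TZc: "coprime TZ (int p)" unfolding TZ_def
      by (intro prod_coprime_left) (simp add: zc Tf_coprime)
    have h1: "[AA * TZ = Z] (mod q)"
    proof -
      have "[(\<Prod>j\<in>J. \<Prod>kk\<in>K. A j kk * Tf p k (z j kk)) = Z] (mod q)"
        unfolding Z_def by (intro cong_prod) (rule hA)
      thus ?thesis by (simp add: AA_def TZ_def prod.distrib)
    qed
    have h2: "[BB * TW = W] (mod q)"
    proof -
      have "[(\<Prod>j\<in>J. B j * Tf p k (w j)) = W] (mod q)"
        unfolding W_def by (intro cong_prod) (rule hB)
      thus ?thesis by (simp add: BB_def TW_def prod.distrib)
    qed
    have h4: "Tf p k (int N ^ U * Z) = Tf p k (int N ^ U) * TZ"
    proof -
      have "Tf p k Z = (\<Prod>j\<in>J. Tf p k (\<Prod>kk\<in>K. z j kk))" unfolding Z_def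
        by (rule Tf_prod) (auto simp: J_def intro: prod_coprime_left zc)
      also have "\<dots> = TZ" unfolding TZ_def
        by (intro prod.cong refl Tf_prod) (auto simp: K_def zc)
      finally have "Tf p k Z = TZ" .
      thus ?thesis using Tf_mult[OF NUc Zc] by simp
    qed
    have h5: "Tf p k (eps ^ ord M p * W) = Tf p k eps ^ ord M p * TW"
    proof -
      have "Tf p k W = TW" unfolding W_def TW_def
        by (rule Tf_prod) (auto simp: wc J_def)
      thus ?thesis using Tf_mult[of "eps ^ ord M p" p W k] Wc epsc Tf_pow[OF epsc] by simp
    qed
    have h3Z: "[int N ^ U * Z = eps ^ ord M p * W] (mod Q)" using h3 unfolding Z_def W_def .
    have h6: "[Tf p k (int N ^ U * Z) = Tf p k (eps ^ ord M p * W)] (mod q)"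
      unfolding q_def by (rule Tf_cong[OF pp cong_dvd_modulus[OF h3Z Qk2]])
    have h3q: "[int N ^ U * Z = eps ^ ord M p * W] (mod q)"
      by (rule cong_dvd_modulus[OF h3Z Qq])
    have "AA * (int N ^ U * TZ) = int N ^ U * (AA * TZ)" by (simp add: algebra_simps)
    also have "[int N ^ U * (AA * TZ) = int N ^ U * Z] (mod q)" using h1 by (rule cong_scalar_left)
    also have "[int N ^ U * Z = eps ^ ord M p * W] (mod q)" using h3q .
    also have "[eps ^ ord M p * W = eps ^ ord M p * (BB * TW)] (mod q)"
      using cong_sym[OF h2] by (rule cong_scalar_left)
    also have "eps ^ ord M p * (BB * TW) = BB * (eps ^ ord M p * TW)" by (simp add: algebra_simps)
    also have "[BB * (eps ^ ord M p * TW) = BB * (Tf p k eps ^ ord M p * TW)] (mod q)"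
      using cong_sym[OF h8] by (intro cong_scalar_left cong_scalar_right cong_pow)
    also have "BB * (Tf p k eps ^ ord M p * TW) = BB * Tf p k (eps ^ ord M p * W)"
      by (simp add: h5)
    also have "[BB * Tf p k (eps ^ ord M p * W) = BB * Tf p k (int N ^ U * Z)] (mod q)"
      using cong_sym[OF h6] by (rule cong_scalar_left)
    also have "BB * Tf p k (int N ^ U * Z) = BB * (Tf p k (int N ^ U) * TZ)" by (simp add: h4)
    also have "[BB * (Tf p k (int N ^ U) * TZ) = BB * (int N ^ U * TZ)] (mod q)"
      using h7 by (intro cong_scalar_left cong_scalar_right)
    finally have "[AA * (int N ^ U * TZ) = BB * (int N ^ U * TZ)] (mod q)" .
    moreover have "coprime (int N ^ U * TZ) q" unfolding q_def using NUc TZc by simp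
    ultimately have "[AA = BB] (mod q)" using cong_mult_rcancel by blast
    thus ?thesis unfolding LHS RHS AA_def BB_def by (simp add: cong_def)
  qed
qed


end
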